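(* For all planar forests $F,G$, the following are equivalent: (1) $\langle F,G\rangle\neq0$; (2) $\langle F,G\rangle=1$; (3) $m(G)\leq F$.
   Context: Let $K$ be a field. Planar rooted trees have their children linearly ordered left to right; a planar forest is a finite, possibly empty, sequence $t_1\cdots t_n$ of planar rooted trees ($1$ = empty forest). $\mathcal{H}$ is the free associative unital $K$-algebra on planar rooted trees, with basis the planar forests and product concatenation. $B^+(F)$ is the tree obtained by grafting the trees of $F$ on a new common root; $\varepsilon(F)=\delta_{F,1}$. $\Delta$ is the unique linear map with $\Delta(1)=1\otimes1$, $\Delta(xy)=(x\otimes1)\Delta(y)+\Delta(x)(1\otimes y)-x\otimes y$, $\Delta(B^+(x))=B^+(x)\otimes 1+(\mathrm{Id}\otimes B^+)\Delta(x)$. $\gamma$ is linear with $\gamma(t_1\cdots t_n)=\delta_{t_1,\bullet}t_2\cdots t_n$ ($\bullet$ the one-vertex tree), $\gamma(1)=0$. $\langle-,-\rangle$ is the unique bilinear form with $\langle1,x\rangle=\varepsilon(x)$, $\langle xy,z\rangle=\langle y\otimes x,\Delta(z)\rangle$ (with $\langle a\otimes b,c\otimes d\rangle=\langle a,c\rangle\langle b,d\rangle$), $\langle B^+(x),y\rangle=\langle x,\gamma(y)\rangle$. $m$ is the map on planar forests defined recursively by $m(1)=1$, $m(B^+(F_1)F_2)=B^+(m(F_2))m(F_1)$. Order on forests: an admissible transformation chooses a vertex $s$ which is the leftmost child of its parent $u$; if $u$ is not a root, with parent $r$, the subtree rooted at $s$ is moved to become a child of $r$ immediately to the left of $u$;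 if $u$ is a root, the subtree rooted at $s$ becomes a new tree immediately to the left of the tree of $u$; everything else unchanged. $F\leq G$ iff $G$ is obtained from $F$ by a finite (possibly empty) sequence of admissible transformations. *)

theory Defs
  imports Main
begin

text \<open>A planar rooted tree is a root together with the (left-to-right ordered)
list of subtrees grafted on it; a planar forest is a list of planar trees,
the empty list being the empty forest 1.\<close>

datatype ptree = Node "ptree list"

type_synonym pforest = "ptree list"

definition Bplus :: "pforest \<Rightarrow> ptree" where
  "Bplus F = Node F"

definition bullet :: ptree where
  "bullet = Node []"

definition eps :: "pforest \<Rightarrow> 'a::zero_neq_one" where
  "eps F = (if F = [] then 1 else 0)"

text \<open>gamma(t1...tn) = delta_{t1,bullet} t2...tn, gamma(1) = 0.
 None encodes the zero element of H, Some G' the basis element G'.\<close>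
fun gamma :: "pforest \<Rightarrow> pforest option" where
  "gamma [] = None"
| "gamma (t # F) = (if t = bullet then Some F else None)"

text \<open>Elements of H (x) H are represented as formal linear combinations:
 lists of triples (c, A, B) standing for the sum of c * (A (x) B).
 The coproduct of a basis forest is computed by the defining recursion:
 Delta(1) = 1(x)1, Delta(B+(x)) = B+(x)(x)1 + (Id (x) B+) Delta(x), and
 Delta(t y) = (t(x)1) Delta(y) + Delta(t) (1(x)y) - t(x)y (the product rule
 with x = t a tree, y the remaining forest).\<close>

function coprod :: "pforest \<Rightarrow> ('a::comm_ring_1 \<times> pforest \<times> pforest) list" where
  "coprod [] = [(1, [], [])]"
| "coprod [Node F] =
     (1, [Bplus F], []) # map (\<lambda>(c, A, B). (c, A, [Bplus B])) (coprod F)"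
| "coprod (t # u # F) =
     map (\<lambda>(c, A, B). (c, t # A, B)) (coprod (u # F))
     @ map (\<lambda>(c, A, B). (c, A, B @ (u # F))) (coprod [t])
     @ [(- 1, [t], u # F)]"
  apply pat_completeness apply auto done
termination
  by (relation "measure (size_list size)") auto

text \<open>The bilinear form on basis forests, computed by the defining rules
 <1,x> = eps(x), <xy,z> = <y (x) x, Delta z> (with x = t the first tree),
 <B+(x),y> = <x,gamma(y)>.\<close>

fun pairing :: "pforest \<Rightarrow> pforest \<Rightarrow> 'a::comm_ring_1" where
  "pairing [] G = eps G"
| "pairing [Node F] G = (case gamma G of None \<Rightarrow> 0 | Some G' \<Rightarrow> pairing F G')"
| "pairing (t # u # F) G =
     sum_list (map (\<lambda>(c, G1, G2). c * pairing (u # F) G1 * pairing [t] G2) (coprod G))"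

fun mmap :: "pforest \<Rightarrow> pforest" where
  "mmap [] = []"
| "mmap (Node F1 # F2) = Node (mmap F2) # mmap F1"

text \<open>One admissible transformation: a vertex s that is the leftmost child of u
 is detached (with its subtree) and placed immediately left of u, among the
 children of u's parent (or as a new tree in the forest, if u is a root).\<close>

inductive adm :: "pforest \<Rightarrow> pforest \<Rightarrow> bool" where
  here: "adm (A @ Node (s # C) # B) (A @ s # Node C # B)"
| inside: "adm H H' \<Longrightarrow> adm (A @ Node H # B) (A @ Node H' # B)"

definition forest_le :: "pforest \<Rightarrow> pforest \<Rightarrow> bool" where
  "forest_le F G = adm\<^sup>*\<^sup>* F G"

end

theory Submission
  imports Defs
begin

function fsize :: "pforest \<Rightarrow> nat" where
  "fsize [] = 0"
| "fsize (Node L # R) = fsize L + Suc (fsize R)"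
  by pat_completeness auto
termination by (relation "measure (size_list size)") auto

function split :: "nat \<Rightarrow> pforest \<Rightarrow> pforest \<times> pforest" where
  "split k [] = ([], [])"
| "split k (Node L # R) =
     (if k \<le> fsize L then (case split k L of (A, B) \<Rightarrow> (A, Node B # R))
      else (case split (k - fsize L - 1) R of (A, B) \<Rightarrow> (Node L # A, B)))"
  by pat_completeness auto
termination by (relation "measure (\<lambda>(k,F). size_list size F)") auto

function cop :: "pforest \<Rightarrow> (pforest \<times> pforest) list" where
  "cop [] = [([], [])]"
| "cop (Node L # R) = map (\<lambda>(A, B). (A, Node B # R)) (cop L) @ map (\<lambda>(A, B). (Node L # A, B)) (cop R)"
  by pat_completeness auto
termination by (relation "measure (size_list size)") auto

lemma fsize_app[simp]: "fsize (A @ B) = fsize A + fsize B"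
  by (induction A rule: fsize.induct) auto

lemma fsize_0[simp]: "fsize X = 0 \<longleftrightarrow> X = []"
  by (cases X rule: fsize.cases) auto

lemma fsize_mmap[simp]: "fsize (mmap X) = fsize X"
  by (induction X rule: mmap.induct) auto

lemma mmap_mmap[simp]: "mmap (mmap X) = X"
  by (induction X rule: mmap.induct) auto

lemma mmap_nil[simp]: "mmap X = [] \<longleftrightarrow> X = []"
  by (cases X rule: mmap.cases) auto

lemma sum_map_aux1:
  "(\<lambda>(c,A,B). c * f A B) \<circ> (\<lambda>(c, A, B). (c, A, g B)) = (\<lambda>(c,A,B). c * f A (g B))"
  by auto
lemma sum_map_aux2:
  "(\<lambda>(c,A,B). c * f A B) \<circ> (\<lambda>(c, A, B). (c, g A, h B)) = (\<lambda>(c,A,B). c * f (g A) (h B))"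
  by auto
lemma sum_map_aux3:
  "(\<lambda>(A,B). f A B) \<circ> (\<lambda>(A, B). (g A, h B)) = (\<lambda>(A,B). f (g A) (h B))"
  by auto

lemma coprod_cop:
  "sum_list (map (\<lambda>(c,A,B). c * f A B) (coprod G :: ('a::comm_ring_1 \<times> _) list))
   = sum_list (map (\<lambda>(A,B). f A B) (cop G))"
proof (induction G arbitrary: f rule: coprod.induct)
  case 1
  then show ?case by simp
next
  case (2 F)
  show ?case
    using "2"[of "\<lambda>A B. f A [Node B]"]
    by (simp add: sum_map_aux1 sum_map_aux3 Bplus_def)
next
  case (3 t u F)
  obtain L where t: "t = Node L" by (cases t)
  show ?case
    using "3.IH"(1)[of "\<lambda>A B. f (t # A) B"] "3.IH"(2)[of "\<lambda>A B. f A (B @ u # F)"]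
    unfolding coprod.simps(3)
    by (simp add: sum_map_aux1 sum_map_aux2 sum_map_aux3 t del: coprod.simps)
qed

lemma cop_split: "cop G = map (\<lambda>k. split k G) [0..<Suc (fsize G)]"
proof (induction G rule: cop.induct)
  case 1
  then show ?case by simp
next
  case (2 L R)
  have e: "[0..<Suc (fsize (Node L # R))] = [0..<Suc (fsize L)] @ map (\<lambda>j. j + Suc (fsize L)) [0..<Suc (fsize R)]"
  proof -
    have "Suc (fsize (Node L # R)) = Suc (fsize L) + Suc (fsize R)" by simp
    moreover have "[0..<Suc (fsize L) + Suc (fsize R)] = [0..<Suc (fsize L)] @ [Suc (fsize L)..<Suc (fsize L) + Suc (fsize R)]"
      by (rule upt_add_eq_append) simp
    moreover have "[Suc (fsize L)..<Suc (fsize L) + Suc (fsize R)] = map (\<lambda>j. j + Suc (fsize L)) [0..<Suc (fsize R)]"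
      by (metis map_add_upt add.commute)
    ultimately show ?thesis by metis
  qed
  have a: "map (\<lambda>(A, B). (A, Node B # R)) (cop L) = map (\<lambda>k. split k (Node L # R)) [0..<Suc (fsize L)]"
    unfolding 2(1) by (auto simp: split_def)
  have b: "map (\<lambda>(A, B). (Node L # A, B)) (cop R) = map (\<lambda>k. split k (Node L # R)) (map (\<lambda>j. j + Suc (fsize L)) [0..<Suc (fsize R)])"
    unfolding 2(2) by (auto simp: split_def)
  show ?case unfolding e cop.simps a b by simp
qed

lemma split_Node_le: "k \<le> fsize L \<Longrightarrow> split k (Node L # R) = (fst (split k L), Node (snd (split k L)) # R)"
  by (simp add: split_def)
lemma split_Node_gt: "\<not> k \<le> fsize L \<Longrightarrow> split k (Node L # R) = (Node L # fst (split (k - fsize L - 1) R), snd (split (k - fsize L - 1) R))"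
  by (simp add: split_def)
declare split.simps(2)[simp del]

lemma split_size: "k \<le> fsize H \<Longrightarrow> fsize (fst (split k H)) = k"
proof (induction k H rule: split.induct)
  case (1 k)
  then show ?case by simp
next
  case (2 k L R)
  then show ?case by (cases "k \<le> fsize L") (auto simp: split_Node_le split_Node_gt)
qed

lemma split_ge: "fsize H \<le> k \<Longrightarrow> split k H = (H, [])"
proof (induction k H rule: split.induct)
  case (1 k)
  then show ?case by simp
next
  case (2 k L R)
  then show ?case by (cases "k \<le> fsize L") (auto simp: split_Node_le split_Node_gt)
qed

lemma split_0[simp]: "split 0 X = ([], X)"
  by (induction X rule: fsize.induct) (auto simp: split_Node_le)

lemma split_app: "split k (A @ X) = (if k \<le> fsize A then (fst (split k A), snd (split k A) @ X)
   else (A @ fst (split (k - fsize A) X), snd (split (k - fsize A) X)))"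
proof (induction A arbitrary: k rule: fsize.induct)
  case 1
  then show ?case by simp
next
  case (2 L R)
  show ?case
  proof (cases "k \<le> fsize L")
    case True
    then show ?thesis by (simp add: split_Node_le)
  next
    case False
    then show ?thesis using 2[of "k - fsize L - 1"] by (auto simp: split_Node_gt)
  qed
qed

lemma split_mmap: "k \<le> fsize H \<Longrightarrow>
  split k (mmap H) = (mmap (snd (split (fsize H - k) H)), mmap (fst (split (fsize H - k) H)))"
proof (induction H arbitrary: k rule: mmap.induct)
  case 1
  then show ?case by simp
next
  case (2 L R)
  show ?case
  proof (cases "k \<le> fsize R")
    case True
    then show ?thesis using 2(1)[of k] 2(3) by (auto simp: split_Node_le split_Node_gt)
  next
    case False
    then show ?thesis using 2(2)[of "k - fsize R - 1"] 2(3) by (auto simp: split_Node_le split_Node_gt)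
  qed
qed

lemma adm_fsize: "adm F G \<Longrightarrow> fsize F = fsize G"
proof (induction rule: adm.induct)
  case (here A s C B)
  then show ?case by (cases s) simp
next
  case (inside H H' A B)
  then show ?case by simp
qed

lemma le_fsize: "adm\<^sup>*\<^sup>* F G \<Longrightarrow> fsize F = fsize G"
  by (induction rule: rtranclp_induct) (auto dest: adm_fsize)

lemma adm_length: "adm F G \<Longrightarrow> length F \<le> length G"
  by (induction rule: adm.induct) auto

lemma le_length: "adm\<^sup>*\<^sup>* F G \<Longrightarrow> length F \<le> length G"
  by (induction rule: rtranclp_induct) (auto dest: adm_length)

lemma adm_prefix: "adm X Y \<Longrightarrow> adm (P @ X) (P @ Y)"
proof (induction rule: adm.induct)
  case (here A s C B)
  then show ?case using adm.here[of "P @ A" s C B] by simp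
next
  case (inside H H' A B)
  then show ?case using adm.inside[of H H' "P @ A" B] by simp
qed

lemma adm_suffix: "adm X Y \<Longrightarrow> adm (X @ P) (Y @ P)"
proof (induction rule: adm.induct)
  case (here A s C B)
  then show ?case using adm.here[of A s C "B @ P"] by simp
next
  case (inside H H' A B)
  then show ?case using adm.inside[of H H' A "B @ P"] by simp
qed

lemma adm_node: "adm X Y \<Longrightarrow> adm (Node X # P) (Node Y # P)"
  using adm.inside[of X Y "[]" P] by simp

lemma le_prefix: "adm\<^sup>*\<^sup>* X Y \<Longrightarrow> adm\<^sup>*\<^sup>* (P @ X) (P @ Y)"
  by (induction rule: rtranclp_induct) (auto intro: rtranclp.rtrancl_into_rtrancl adm_prefix)

lemma le_suffix: "adm\<^sup>*\<^sup>* X Y \<Longrightarrow> adm\<^sup>*\<^sup>* (X @ P) (Y @ P)"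
  by (induction rule: rtranclp_induct) (auto intro: rtranclp.rtrancl_into_rtrancl adm_suffix)

lemma le_node: "adm\<^sup>*\<^sup>* X Y \<Longrightarrow> adm\<^sup>*\<^sup>* (Node X # P) (Node Y # P)"
  by (induction rule: rtranclp_induct) (auto intro: rtranclp.rtrancl_into_rtrancl adm_node)

lemma le_app: "adm\<^sup>*\<^sup>* X Y \<Longrightarrow> adm\<^sup>*\<^sup>* U V \<Longrightarrow> adm\<^sup>*\<^sup>* (X @ U) (Y @ V)"
  by (meson le_prefix le_suffix rtranclp_trans)

lemma le_shift: "adm\<^sup>*\<^sup>* (Node (A @ C) # R) (A @ Node C # R)"
proof (induction A)
  case Nil
  then show ?case by simp
next
  case (Cons a A)
  have "adm (Node (a # (A @ C)) # R) (a # Node (A @ C) # R)"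
    using adm.here[of "[]" a "A @ C" R] by simp
  moreover have "adm\<^sup>*\<^sup>* ([a] @ Node (A @ C) # R) ([a] @ A @ Node C # R)"
    using le_prefix[OF Cons.IH] by blast
  ultimately show ?case by simp
qed

lemma le_split: "adm\<^sup>*\<^sup>* H (fst (split k H) @ snd (split k H))"
proof (induction k H rule: split.induct)
  case (1 k)
  then show ?case by simp
next
  case (2 k L R)
  show ?case
  proof (cases "k \<le> fsize L")
    case True
    then show ?thesis using le_node[OF 2(1)[OF True], of R] le_shift[of "fst (split k L)" "snd (split k L)" R]
      by (simp add: split_Node_le)
  next
    case False
    then show ?thesis using le_prefix[OF 2(2)[OF False], of "[Node L]"]
      by (simp add: split_Node_gt)
  qed
qed

lemma split_here_mono:
  "adm\<^sup>*\<^sup>* (fst (split k (Node (Node S # C) # B))) (fst (split k (Node S # Node C # B))) \<and>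
   adm\<^sup>*\<^sup>* (snd (split k (Node (Node S # C) # B))) (snd (split k (Node S # Node C # B)))"
proof -
  have h: "adm (Node (Node X # Y) # Z) (Node X # Node Y # Z)" for X Y Z
    using adm.here[of "[]" "Node X" Y Z] by simp
  consider "k \<le> fsize S" | "\<not> k \<le> fsize S" "k - fsize S - 1 \<le> fsize C" | "\<not> k \<le> fsize S" "\<not> k - fsize S - 1 \<le> fsize C"
    by blast
  then show ?thesis
  proof cases
    case 1
    then show ?thesis by (simp add: split_Node_le h r_into_rtranclp)
  next
    case 2
    then show ?thesis by (simp add: split_Node_le split_Node_gt)
  next
    case 3
    then have e: "k - (fsize S + Suc (fsize C)) - 1 = k - fsize S - 1 - fsize C - 1" by simp
    from 3 show ?thesis by (simp add: split_Node_le split_Node_gt h r_into_rtranclp e)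
  qed
qed

lemma adm_split_mono: "adm H H' \<Longrightarrow>
   adm\<^sup>*\<^sup>* (fst (split k H)) (fst (split k H')) \<and> adm\<^sup>*\<^sup>* (snd (split k H)) (snd (split k H'))"
proof (induction arbitrary: k rule: adm.induct)
  case (here A s C B)
  obtain S where s: "s = Node S" by (cases s)
  show ?case
  proof (cases "k \<le> fsize A")
    case True
    then show ?thesis using adm_prefix[OF adm.here[of "[]" s C B], of "snd (split k A)"]
      by (simp add: split_app)
  next
    case False
    have "fsize (Node (s # C) # B) = fsize (s # Node C # B)" by (simp add: s)
    then show ?thesis using False split_here_mono[of "k - fsize A" S C B]
      by (simp add: split_app s le_prefix)
  qed
next
  case (inside H H' A B)
  have fs: "fsize H = fsize H'" using adm_fsize[OF inside.hyps] .
  show ?case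
  proof (cases "k \<le> fsize A")
    case True
    then show ?thesis using adm_prefix[OF adm_node[OF inside.hyps], of "snd (split k A)" B]
      by (simp add: split_app)
  next
    case False
    note F = False
    show ?thesis
    proof (cases "k - fsize A \<le> fsize H")
      case True
      then show ?thesis using F inside.IH[of "k - fsize A"] fs
        by (simp add: split_app split_Node_le le_prefix le_node)
    next
      case False
      then show ?thesis using F fs adm_node[OF inside.hyps]
        by (simp add: split_app split_Node_gt le_prefix r_into_rtranclp)
    qed
  qed
qed

lemma le_split_mono: "adm\<^sup>*\<^sup>* H H' \<Longrightarrow>
   adm\<^sup>*\<^sup>* (fst (split k H)) (fst (split k H')) \<and> adm\<^sup>*\<^sup>* (snd (split k H)) (snd (split k H'))"
proof (induction rule: rtranclp_induct)
  case base
  then show ?case by simp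
next
  case (step y z)
  then show ?case using adm_split_mono[OF step(2), of k] by (meson rtranclp_trans)
qed

lemma le_cons_iff: "adm\<^sup>*\<^sup>* H (t # y) \<longleftrightarrow>
   adm\<^sup>*\<^sup>* (fst (split (fsize [t]) H)) [t] \<and> adm\<^sup>*\<^sup>* (snd (split (fsize [t]) H)) y"
proof
  assume a: "adm\<^sup>*\<^sup>* H (t # y)"
  have "split (fsize [t]) (t # y) = ([t], y)"
    using split_app[of "fsize [t]" "[t]" y] split_ge[of "[t]" "fsize [t]"] by simp
  then show "adm\<^sup>*\<^sup>* (fst (split (fsize [t]) H)) [t] \<and> adm\<^sup>*\<^sup>* (snd (split (fsize [t]) H)) y"
    using le_split_mono[OF a, of "fsize [t]"] by simp
next
  assume a: "adm\<^sup>*\<^sup>* (fst (split (fsize [t]) H)) [t] \<and> adm\<^sup>*\<^sup>* (snd (split (fsize [t]) H)) y"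
  have "adm\<^sup>*\<^sup>* (fst (split (fsize [t]) H) @ snd (split (fsize [t]) H)) ([t] @ y)"
    using a le_app by blast
  then show "adm\<^sup>*\<^sup>* H (t # y)" using le_split[of H "fsize [t]"] by (simp add: rtranclp_trans)
qed

lemma le_single_aux: "adm\<^sup>*\<^sup>* H X \<Longrightarrow> X = [Node L] \<Longrightarrow> \<exists>H'. H = [Node H'] \<and> adm\<^sup>*\<^sup>* H' L"
proof (induction arbitrary: L rule: converse_rtranclp_induct)
  case base
  then show ?case by simp
next
  case (step y z)
  obtain Z where z: "z = [Node Z]" and Z: "adm\<^sup>*\<^sup>* Z L" using step.IH[OF step.prems] by blast
  from step.hyps(1) show ?case unfolding z
  proof (cases rule: adm.cases)
    case (here A s C B)
    then have "length (A @ s # Node C # B) = length [Node Z]" using z by simp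
    then show ?thesis by simp
  next
    case (inside H1 H1' A B)
    then have "A = [] \<and> B = []" using z by (cases A) auto
    then show ?thesis using inside z Z by (auto intro: converse_rtranclp_into_rtranclp)
  qed
qed

lemma le_single: "adm\<^sup>*\<^sup>* H [Node L] \<longleftrightarrow> (\<exists>H'. H = [Node H'] \<and> adm\<^sup>*\<^sup>* H' L)"
  using le_single_aux[of H "[Node L]" L] le_node[of _ L "[]"] by blast

lemma main: "pairing F G = (if adm\<^sup>*\<^sup>* (mmap G) F then (1::'a::comm_ring_1) else 0)"
proof (induction "fsize F" arbitrary: F G rule: less_induct)
  case less
  consider "F = []" | L where "F = [Node L]" | t u R where "F = t # u # R"
    by (metis list.exhaust ptree.exhaust)
  then show ?case
  proof cases
    case 1
    have "adm\<^sup>*\<^sup>* (mmap G) [] \<longleftrightarrow> G = []"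
      using le_fsize[of "mmap G" "[]"] by auto
    then show ?thesis using 1 by (simp add: eps_def)
  next
    case 2
    have IH: "pairing L G' = (if adm\<^sup>*\<^sup>* (mmap G') L then (1::'a) else 0)" for G'
      using less[of L G'] 2 by simp
    show ?thesis
    proof (cases G)
      case Nil
      then show ?thesis using 2 le_single[of "[]" L] by simp
    next
      case (Cons g G')
      obtain X where g: "g = Node X" by (cases g)
      have "adm\<^sup>*\<^sup>* (mmap G) F \<longleftrightarrow> X = [] \<and> adm\<^sup>*\<^sup>* (mmap G') L"
        using 2 Cons g le_single[of "Node (mmap G') # mmap X" L] by auto
      then show ?thesis using 2 Cons g IH by (auto simp: bullet_def)
    qed
  next
    case 3
    define y where "y = u # R"
    have F: "F = t # y" using 3 y_def by simp
    have IHy: "pairing y A = (if adm\<^sup>*\<^sup>* (mmap A) y then (1::'a) else 0)" for A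
      using less[of y A] F by (cases t) simp
    have IHt: "pairing [t] A = (if adm\<^sup>*\<^sup>* (mmap A) [t] then (1::'a) else 0)" for A
      using less[of "[t]" A] F y_def 3 by (cases t; cases u) simp
    define g where "g k = (if adm\<^sup>*\<^sup>* (mmap (fst (split k G))) y then (1::'a) else 0) *
                     (if adm\<^sup>*\<^sup>* (mmap (snd (split k G))) [t] then 1 else 0)" for k
    have "pairing F G = sum_list (map (\<lambda>(c,A,B). c * (pairing y A * pairing [t] B)) (coprod G))"
      unfolding 3 y_def by (simp add: mult.assoc)
    also have "\<dots> = sum_list (map (\<lambda>(A,B). pairing y A * pairing [t] B) (cop G))"
      by (rule coprod_cop)
    also have "\<dots> = sum_list (map g [0..<Suc (fsize G)])"
      unfolding cop_split by (simp add: IHy IHt split_def comp_def g_def[abs_def])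
    also have "\<dots> = sum g {0..<Suc (fsize G)}"
      by (simp add: interv_sum_list_conv_sum_set_nat)
    also have "\<dots> = sum (\<lambda>k. if k = fsize y then g k else 0) {0..<Suc (fsize G)}"
    proof (rule sum.cong)
      fix k assume k: "k \<in> {0..<Suc (fsize G)}"
      show "g k = (if k = fsize y then g k else 0)"
      proof (cases "k = fsize y")
        case False
        have "fsize (mmap (fst (split k G))) = k" using k split_size[of k G] by simp
        then have "\<not> adm\<^sup>*\<^sup>* (mmap (fst (split k G))) y" using False le_fsize[of "mmap (fst (split k G))" y] by auto
        then show ?thesis using False by (simp add: g_def)
      qed simp
    qed simp
    also have "\<dots> = (if fsize y \<le> fsize G then g (fsize y) else 0)"
      by simp
    also have "\<dots> = (if adm\<^sup>*\<^sup>* (mmap G) F then 1 else 0)"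
    proof (cases "fsize y \<le> fsize G")
      case False
      then have "fsize (mmap G) \<noteq> fsize F" using F by (cases t) simp
      then have "\<not> adm\<^sup>*\<^sup>* (mmap G) F" using le_fsize[of "mmap G" F] by blast
      then show ?thesis using False by simp
    next
      case True
      define H where "H = mmap G"
      have G: "G = mmap H" using H_def by simp
      have fH: "fsize H = fsize G" using H_def by simp
      define A' where "A' = fst (split (fsize H - fsize y) H)"
      define B' where "B' = snd (split (fsize H - fsize y) H)"
      have sp: "split (fsize y) G = (mmap B', mmap A')"
        unfolding G A'_def B'_def using split_mmap[of "fsize y" H] True fH by simp
      have gy: "g (fsize y) = (if adm\<^sup>*\<^sup>* B' y \<and> adm\<^sup>*\<^sup>* A' [t] then 1 else 0)"
        unfolding g_def sp by simp
      show ?thesis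
      proof (cases "fsize H = fsize [t] + fsize y")
        case True
        then have e: "fsize H - fsize y = fsize [t]" by simp
        have "adm\<^sup>*\<^sup>* H F \<longleftrightarrow> adm\<^sup>*\<^sup>* B' y \<and> adm\<^sup>*\<^sup>* A' [t]"
          unfolding F A'_def B'_def e using le_cons_iff[of H t y] by blast
        then show ?thesis using gy \<open>fsize y \<le> fsize G\<close> H_def by simp
      next
        case False
        have "fsize A' = fsize H - fsize y" unfolding A'_def by (rule split_size) simp
        then have "fsize A' \<noteq> fsize [t]" using False True fH by simp
        then have "\<not> adm\<^sup>*\<^sup>* A' [t]" using le_fsize[of A' "[t]"] by blast
        moreover have "fsize F = fsize [t] + fsize y" using F fsize_app[of "[t]" y] by simp
        then have "\<not> adm\<^sup>*\<^sup>* H F" using False le_fsize[of H F] by auto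
        ultimately show ?thesis using gy \<open>fsize y \<le> fsize G\<close> H_def by simp
      qed
    qed
    finally show ?thesis .
  qed
qed

theorem theorem37:
  fixes F G :: pforest
  shows "((pairing F G :: 'k::field) \<noteq> 0 \<longleftrightarrow> (pairing F G :: 'k) = 1)
       \<and> ((pairing F G :: 'k) = 1 \<longleftrightarrow> forest_le (mmap G) F)"
  unfolding main[of F G] forest_le_def by simp

end
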